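(* Let $\mathcal{G}_R$ be the class of all finite reflexive graphs and let $K_n$ be the complete reflexive graph on $n$ vertices. Then the class $\mathrm{Av}(K_n)=\{H\in\mathcal{G}_R: K_n\not\preceq H\}$, with respect to the strong homomorphic image ordering $\preceq$, is well quasi-ordered.
   Context: A reflexive graph is a set with a symmetric edge relation having a loop at every vertex. A homomorphism maps edges to edges; it is strong if additionally every edge of the target between vertices of the image is the image of an edge. Strong homomorphic image ordering: $A\preceq B$ iff there is a surjective strong homomorphism $B\to A$. Well quasi-ordered means no infinite strictly decreasing sequence and no infinite antichain; graphs considered up to isomorphism. *)

theory Defs
  imports Main
begin

text \<open>Every finite graph is isomorphic to one of this form, so this represents all finite graphs up to isomorphism.\<close>
type_synonym graph = "nat set \<times> (nat \<times> nat) set"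

definition verts :: "graph \<Rightarrow> nat set" where "verts G = fst G"
definition edges :: "graph \<Rightarrow> (nat \<times> nat) set" where "edges G = snd G"

definition finite_reflexive_graph :: "graph \<Rightarrow> bool" where
  "finite_reflexive_graph G \<longleftrightarrow>
     finite (verts G) \<and> edges G \<subseteq> verts G \<times> verts G \<and>
     (\<forall>x y. (x, y) \<in> edges G \<longrightarrow> (y, x) \<in> edges G) \<and>
     (\<forall>x\<in>verts G. (x, x) \<in> edges G)"

definition graph_hom :: "graph \<Rightarrow> graph \<Rightarrow> (nat \<Rightarrow> nat) \<Rightarrow> bool" where
  "graph_hom G H f \<longleftrightarrow>
     (\<forall>x\<in>verts G. f x \<in> verts H) \<and>
     (\<forall>x y. (x, y) \<in> edges G \<longrightarrow> (f x, f y) \<in> edges H)"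

definition strong_hom :: "graph \<Rightarrow> graph \<Rightarrow> (nat \<Rightarrow> nat) \<Rightarrow> bool" where
  "strong_hom G H f \<longleftrightarrow> graph_hom G H f \<and>
     (\<forall>u v. u \<in> f ` verts G \<and> v \<in> f ` verts G \<and> (u, v) \<in> edges H \<longrightarrow>
        (\<exists>x y. (x, y) \<in> edges G \<and> f x = u \<and> f y = v))"

definition shi_le :: "graph \<Rightarrow> graph \<Rightarrow> bool" where
  "shi_le A B \<longleftrightarrow> (\<exists>f. strong_hom B A f \<and> f ` verts B = verts A)"

definition complete_rgraph :: "nat \<Rightarrow> graph" where
  "complete_rgraph n = ({0..<n}, {0..<n} \<times> {0..<n})"

definition wqo_class :: "(graph \<Rightarrow> graph \<Rightarrow> bool) \<Rightarrow> graph set \<Rightarrow> bool" where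
  "wqo_class R C \<longleftrightarrow>
     \<not> (\<exists>g :: nat \<Rightarrow> graph. (\<forall>i. g i \<in> C) \<and> (\<forall>i. R (g (Suc i)) (g i) \<and> \<not> R (g i) (g (Suc i)))) \<and>
     \<not> (\<exists>g :: nat \<Rightarrow> graph. (\<forall>i. g i \<in> C) \<and> (\<forall>i j. i \<noteq> j \<longrightarrow> \<not> R (g i) (g j)))"

definition Av_K :: "nat \<Rightarrow> graph set" where
  "Av_K n = {H. finite_reflexive_graph H \<and> \<not> shi_le (complete_rgraph n) H}"

end

theory Submission
  imports Defs "HOL-Library.Ramsey"
begin

abbreviation frg where "frg \<equiv> finite_reflexive_graph"

lemma frg_E: assumes "frg G" shows "finite (verts G)"
  "(x,y) \<in> edges G \<Longrightarrow> x \<in> verts G" "(x,y) \<in> edges G \<Longrightarrow> y \<in> verts G"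
  "(x,y) \<in> edges G \<Longrightarrow> (y,x) \<in> edges G" "x \<in> verts G \<Longrightarrow> (x,x) \<in> edges G"
  using assms unfolding finite_reflexive_graph_def by auto

definition twin :: "graph \<Rightarrow> nat \<Rightarrow> nat \<Rightarrow> bool" where
 "twin G u v \<longleftrightarrow> u \<in> verts G \<and> v \<in> verts G \<and> (u = v \<or> ((u,v) \<notin> edges G \<and>
    (\<forall>w. w \<noteq> u \<and> w \<noteq> v \<longrightarrow> ((u,w) \<in> edges G \<longleftrightarrow> (v,w) \<in> edges G))))"

definition cls where "cls G u = {v. twin G u v}"
definition Cls where "Cls G = cls G ` verts G"
definition cadj where "cadj G A B \<longleftrightarrow> (\<exists>x\<in>A. \<exists>y\<in>B. (x,y) \<in> edges G)"

lemma twin_sym: "frg G \<Longrightarrow> twin G u v \<Longrightarrow> twin G v u"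
  unfolding twin_def using frg_E(4) by metis

lemma twin_trans: assumes "frg G" "twin G u v" "twin G v w" shows "twin G u w"
proof -
  have E: "\<And>x y. (x,y) \<in> edges G \<Longrightarrow> (y,x) \<in> edges G" using frg_E(4)[OF assms(1)] by blast
  show ?thesis
  proof (cases "u = v \<or> v = w \<or> u = w")
    case True then show ?thesis using assms(2,3) unfolding twin_def by auto
  next
    case False
    have uv: "(u,v) \<notin> edges G" "\<And>x. x \<noteq> u \<Longrightarrow> x \<noteq> v \<Longrightarrow> (u,x) \<in> edges G \<longleftrightarrow> (v,x) \<in> edges G"
      using assms(2) False unfolding twin_def by auto
    have vw: "(v,w) \<notin> edges G" "\<And>x. x \<noteq> v \<Longrightarrow> x \<noteq> w \<Longrightarrow> (v,x) \<in> edges G \<longleftrightarrow> (w,x) \<in> edges G"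
      using assms(3) False unfolding twin_def by auto
    have "(u,w) \<notin> edges G" using uv(2)[of w] vw(1) False by auto
    moreover have "\<forall>x. x \<noteq> u \<and> x \<noteq> w \<longrightarrow> ((u,x) \<in> edges G \<longleftrightarrow> (w,x) \<in> edges G)"
    proof (intro allI impI)
      fix x assume x: "x \<noteq> u \<and> x \<noteq> w"
      show "(u,x) \<in> edges G \<longleftrightarrow> (w,x) \<in> edges G"
      proof (cases "x = v")
        case True then show ?thesis using uv(1) vw(1) E by blast
      next
        case False then show ?thesis using uv(2)[of x] vw(2)[of x] x by blast
      qed
    qed
    ultimately show ?thesis using assms(2,3) unfolding twin_def by auto
  qed
qed

lemma cls_sub: "cls G u \<subseteq> verts G" unfolding cls_def twin_def by auto
lemma cls_self: "u \<in> verts G \<Longrightarrow> u \<in> cls G u" unfolding cls_def twin_def by auto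
lemma cls_eq: assumes "frg G" "v \<in> cls G u" shows "cls G v = cls G u"
  using assms twin_sym twin_trans unfolding cls_def by blast

lemma finite_Cls: "frg G \<Longrightarrow> finite (Cls G)" unfolding Cls_def using frg_E(1) by blast

lemma Cls_elem: "frg G \<Longrightarrow> A \<in> Cls G \<Longrightarrow> x \<in> A \<Longrightarrow> A = cls G x"
  unfolding Cls_def using cls_eq by blast

lemma Cls_sub: "A \<in> Cls G \<Longrightarrow> A \<subseteq> verts G" unfolding Cls_def using cls_sub by blast

lemma Cls_ne: "A \<in> Cls G \<Longrightarrow> A \<noteq> {}" unfolding Cls_def using cls_self by blast

lemma Cls_fin: "frg G \<Longrightarrow> A \<in> Cls G \<Longrightarrow> finite A" using Cls_sub frg_E(1) finite_subset by blast

lemma cls_in: "x \<in> verts G \<Longrightarrow> cls G x \<in> Cls G" unfolding Cls_def by blast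

lemma edge_cls:
  assumes G: "frg G" and A: "A \<in> Cls G" and B: "B \<in> Cls G" and x: "x \<in> A" and y: "y \<in> B"
  shows "(x,y) \<in> edges G \<longleftrightarrow> ((A = B \<and> x = y) \<or> (A \<noteq> B \<and> cadj G A B))"
proof
  assume e: "(x,y) \<in> edges G"
  show "(A = B \<and> x = y) \<or> (A \<noteq> B \<and> cadj G A B)"
  proof (cases "A = B")
    case True
    then have "twin G x y" using Cls_elem[OF G A x] Cls_elem[OF G B y] y unfolding cls_def by auto
    then show ?thesis using e True unfolding twin_def by auto
  next
    case False
    then show ?thesis using e x y unfolding cadj_def by auto
  qed
next
  assume h: "(A = B \<and> x = y) \<or> (A \<noteq> B \<and> cadj G A B)"
  show "(x,y) \<in> edges G"
  proof (cases "A = B")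
    case True
    then show ?thesis using h x Cls_sub[OF A] frg_E(5)[OF G] by auto
  next
    case False
    then obtain x0 y0 where x0: "x0 \<in> A" and y0: "y0 \<in> B" and e0: "(x0,y0) \<in> edges G"
      using h unfolding cadj_def by auto
    have dA: "\<And>z. z \<in> B \<Longrightarrow> z \<notin> A" using Cls_elem[OF G A] Cls_elem[OF G B] False by metis
    have dB: "\<And>z. z \<in> A \<Longrightarrow> z \<notin> B" using dA by blast
    have t1: "twin G x0 x" using Cls_elem[OF G A x0] x unfolding cls_def by auto
    have t2: "twin G y0 y" using Cls_elem[OF G B y0] y unfolding cls_def by auto
    have "(x,y0) \<in> edges G"
    proof (cases "x0 = x")
      case True then show ?thesis using e0 by simp
    next
      case False
      then show ?thesis using t1 e0 dA[OF y0] x x0 unfolding twin_def by metis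
    qed
    then have e1: "(y0,x) \<in> edges G" using frg_E(4)[OF G] by blast
    have "(y,x) \<in> edges G"
    proof (cases "y0 = y")
      case True then show ?thesis using e1 by simp
    next
      case False
      then show ?thesis using t2 e1 dB[OF x] y y0 unfolding twin_def by metis
    qed
    then show ?thesis using frg_E(4)[OF G] by blast
  qed
qed

lemma surj_exists:
  assumes "finite A" "finite B" "B \<noteq> {}" "card B \<le> card A"
  shows "\<exists>s. s ` A = B"
proof -
  obtain b0 where b0: "b0 \<in> B" using assms(3) by blast
  obtain g where g: "g ` B \<subseteq> A" "inj_on g B" using card_le_inj[OF assms(2,1,4)] by blast
  define s where "s x = (if x \<in> g ` B then inv_into B g x else b0)" for x
  have "s ` A = B"
  proof
    show "s ` A \<subseteq> B" using b0 inv_into_into unfolding s_def by (auto simp: inv_into_into)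
    show "B \<subseteq> s ` A"
    proof
      fix b assume b: "b \<in> B"
      then have "s (g b) = b" unfolding s_def using g(2) by auto
      then show "b \<in> s ` A" using g(1) b by (metis image_eqI image_subset_iff)
    qed
  qed
  then show ?thesis by blast
qed

lemma build_hom:
  fixes k :: nat
  assumes G1: "frg G1" and G2: "frg G2"
    and e1: "bij_betw e1 {0..<k} (Cls G1)" and e2: "bij_betw e2 {0..<k} (Cls G2)"
    and adj: "\<forall>i<k. \<forall>j<k. cadj G1 (e1 i) (e1 j) \<longleftrightarrow> cadj G2 (e2 i) (e2 j)"
    and sz: "\<forall>i<k. card (e1 i) \<le> card (e2 i)"
  shows "shi_le G1 G2"
proof -
  have e1i: "\<And>i. i < k \<Longrightarrow> e1 i \<in> Cls G1" using bij_betw_apply[OF e1] by simp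
  have e2i: "\<And>i. i < k \<Longrightarrow> e2 i \<in> Cls G2" using bij_betw_apply[OF e2] by simp
  have "\<forall>i. \<exists>t. i < k \<longrightarrow> t ` e2 i = e1 i"
  proof
    fix i show "\<exists>t. i < k \<longrightarrow> t ` e2 i = e1 i"
    proof (cases "i < k")
      case True
      show ?thesis using surj_exists[OF Cls_fin[OF G2 e2i[OF True]] Cls_fin[OF G1 e1i[OF True]]
          Cls_ne[OF e1i[OF True]]] sz True by blast
    qed simp
  qed
  then obtain s where s: "\<And>i. i < k \<Longrightarrow> s i ` e2 i = e1 i" by metis
  define idx where "idx x = inv_into {0..<k} e2 (cls G2 x)" for x
  define f where "f x = s (idx x) x" for x
  have idx1: "idx x < k \<and> e2 (idx x) = cls G2 x" if "x \<in> verts G2" for x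
  proof -
    have "cls G2 x \<in> e2 ` {0..<k}" using cls_in[OF that] e2 unfolding bij_betw_def by simp
    then show ?thesis unfolding idx_def using inv_into_into[of "cls G2 x" e2 "{0..<k}"]
      by (auto simp: f_inv_into_f)
  qed
  have idx2: "idx x = i" if "i < k" "x \<in> e2 i" for x i
  proof -
    have "e2 i = cls G2 x" using Cls_elem[OF G2 e2i[OF that(1)] that(2)] .
    moreover have "inv_into {0..<k} e2 (e2 i) = i"
      using e2 that(1) unfolding bij_betw_def by (simp add: inv_into_f_f)
    ultimately show ?thesis unfolding idx_def by simp
  qed
  have fin: "f x \<in> e1 (idx x)" if xv: "x \<in> verts G2" for x
  proof -
    have a: "idx x < k" "x \<in> e2 (idx x)" using idx1[OF xv] cls_self[OF xv] by auto
    show ?thesis unfolding f_def using s[OF a(1)] a(2) by (metis image_eqI)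
  qed
  have fV: "f x \<in> verts G1" if xv: "x \<in> verts G2" for x
  proof -
    have "idx x < k" using idx1[OF xv] by auto
    then show ?thesis using fin[OF xv] Cls_sub[OF e1i] by blast
  qed
  have pre: "\<exists>x \<in> e2 i. f x = v" if ik: "i < k" and vi: "v \<in> e1 i" for i v
  proof -
    have "v \<in> s i ` e2 i" using s[OF ik] vi by simp
    then obtain x where x: "x \<in> e2 i" "s i x = v" by (rule imageE) simp
    have "f x = v" unfolding f_def using idx2[OF ik x(1)] x(2) by simp
    then show ?thesis using x(1) by blast
  qed
  have cov: "\<exists>i<k. v \<in> e1 i" if "v \<in> verts G1" for v
  proof -
    have "cls G1 v \<in> e1 ` {0..<k}" using cls_in[OF that] e1 unfolding bij_betw_def by simp
    then obtain i where "i \<in> {0..<k}" "cls G1 v = e1 i" by (rule imageE) simp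
    then show ?thesis using cls_self[OF that] by auto
  qed
  have inj1: "e1 i = e1 j \<Longrightarrow> i < k \<Longrightarrow> j < k \<Longrightarrow> i = j" for i j
    using e1 unfolding bij_betw_def inj_on_def by auto
  have inj2: "e2 i = e2 j \<Longrightarrow> i < k \<Longrightarrow> j < k \<Longrightarrow> i = j" for i j
    using e2 unfolding bij_betw_def inj_on_def by auto
  have hom: "graph_hom G2 G1 f"
    unfolding graph_hom_def
  proof (intro conjI allI impI ballI)
    fix x assume "x \<in> verts G2" then show "f x \<in> verts G1" by (rule fV)
  next
    fix x y assume e: "(x,y) \<in> edges G2"
    have x: "x \<in> verts G2" and y: "y \<in> verts G2" using e frg_E(2,3)[OF G2] by auto
    let ?i = "idx x" and ?j = "idx y"
    have i: "?i < k" "x \<in> e2 ?i" using idx1[OF x] cls_self[OF x] by auto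
    have j: "?j < k" "y \<in> e2 ?j" using idx1[OF y] cls_self[OF y] by auto
    have c: "(e2 ?i = e2 ?j \<and> x = y) \<or> (e2 ?i \<noteq> e2 ?j \<and> cadj G2 (e2 ?i) (e2 ?j))"
      using edge_cls[OF G2 e2i[OF i(1)] e2i[OF j(1)] i(2) j(2)] e by blast
    show "(f x, f y) \<in> edges G1"
    proof (cases "x = y")
      case True then show ?thesis using frg_E(5)[OF G1 fV[OF x]] by simp
    next
      case False
      then have ne: "e2 ?i \<noteq> e2 ?j" and ca: "cadj G2 (e2 ?i) (e2 ?j)" using c by auto
      have "?i \<noteq> ?j" using ne by metis
      then have ne1: "e1 ?i \<noteq> e1 ?j" using inj1 i(1) j(1) by blast
      have ca1: "cadj G1 (e1 ?i) (e1 ?j)" using adj i(1) j(1) ca by blast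
      show ?thesis using edge_cls[OF G1 e1i[OF i(1)] e1i[OF j(1)] fin[OF x] fin[OF y]] ne1 ca1 by blast
    qed
  qed
  have surj: "f ` verts G2 = verts G1"
  proof
    show "f ` verts G2 \<subseteq> verts G1" using fV by blast
    show "verts G1 \<subseteq> f ` verts G2"
    proof
      fix v assume v: "v \<in> verts G1"
      obtain i where i: "i < k" "v \<in> e1 i" using cov[OF v] by blast
      obtain x where "x \<in> e2 i" "f x = v" using pre[OF i] by blast
      then show "v \<in> f ` verts G2" using Cls_sub[OF e2i[OF i(1)]] by blast
    qed
  qed
  have strong: "strong_hom G2 G1 f"
    unfolding strong_hom_def
  proof (intro conjI hom allI impI)
    fix u v assume h: "u \<in> f ` verts G2 \<and> v \<in> f ` verts G2 \<and> (u, v) \<in> edges G1"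
    have u: "u \<in> verts G1" and v: "v \<in> verts G1" using h frg_E(2,3)[OF G1] by auto
    obtain i where i: "i < k" "u \<in> e1 i" using cov[OF u] by blast
    obtain j where j: "j < k" "v \<in> e1 j" using cov[OF v] by blast
    obtain x where x: "x \<in> e2 i" "f x = u" using pre[OF i] by blast
    obtain y where y: "y \<in> e2 j" "f y = v" using pre[OF j] by blast
    show "\<exists>x y. (x, y) \<in> edges G2 \<and> f x = u \<and> f y = v"
    proof (cases "u = v")
      case True
      have "x \<in> verts G2" using x Cls_sub[OF e2i[OF i(1)]] by blast
      then show ?thesis using frg_E(5)[OF G2] x True by blast
    next
      case False
      then have ne1: "e1 i \<noteq> e1 j" and ca: "cadj G1 (e1 i) (e1 j)"
        using edge_cls[OF G1 e1i[OF i(1)] e1i[OF j(1)] i(2) j(2)] h by auto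
      have "i \<noteq> j" using ne1 by blast
      then have ne2: "e2 i \<noteq> e2 j" using inj2 i(1) j(1) by blast
      have ca2: "cadj G2 (e2 i) (e2 j)" using adj i(1) j(1) ca by blast
      have "(x,y) \<in> edges G2" using edge_cls[OF G2 e2i[OF i(1)] e2i[OF j(1)] x(1) y(1)] ne2 ca2 by blast
      then show ?thesis using x y by blast
    qed
  qed
  show ?thesis unfolding shi_le_def using strong surj by blast
qed

lemma card_le_shi: assumes "shi_le A B" "frg B" shows "card (verts A) \<le> card (verts B)"
proof -
  obtain f where "f ` verts B = verts A" using assms(1) unfolding shi_le_def by blast
  then show ?thesis using card_image_le[OF frg_E(1)[OF assms(2)], of f] by simp
qed

lemma same_card_rev:
  assumes A: "frg A" and B: "frg B" and le: "shi_le A B" and c: "card (verts A) = card (verts B)"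
  shows "shi_le B A"
proof -
  obtain f where sf: "strong_hom B A f" and im: "f ` verts B = verts A" using le unfolding shi_le_def by blast
  have inj: "inj_on f (verts B)"
    using eq_card_imp_inj_on[OF frg_E(1)[OF B], of f] im c by simp
  define h where "h = inv_into (verts B) f"
  have hf: "h (f x) = x" if "x \<in> verts B" for x unfolding h_def using inj that by simp
  have hV: "h u \<in> verts B" if "u \<in> verts A" for u unfolding h_def using that im by (metis inv_into_into)
  have fh: "f (h u) = u" if "u \<in> verts A" for u unfolding h_def using that im by (metis f_inv_into_f)
  have hom: "graph_hom A B h" unfolding graph_hom_def
  proof (intro conjI allI impI ballI)
    fix x assume "x \<in> verts A" then show "h x \<in> verts B" by (rule hV)
  next
    fix x y assume e: "(x,y) \<in> edges A"
    have "x \<in> f ` verts B" "y \<in> f ` verts B" using e frg_E(2,3)[OF A] im by auto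
    then obtain x' y' where e': "(x',y') \<in> edges B" "f x' = x" "f y' = y"
      using sf e unfolding strong_hom_def by blast
    have "h x = x'" "h y = y'" using hf e' frg_E(2,3)[OF B] by auto
    then show "(h x, h y) \<in> edges B" using e' by simp
  qed
  have strong: "strong_hom A B h" unfolding strong_hom_def
  proof (intro conjI hom allI impI)
    fix u v assume a: "u \<in> h ` verts A \<and> v \<in> h ` verts A \<and> (u, v) \<in> edges B"
    have "(f u, f v) \<in> edges A" using sf a unfolding strong_hom_def graph_hom_def by blast
    moreover have "h (f u) = u" "h (f v) = v" using hf a frg_E(2,3)[OF B] by auto
    ultimately show "\<exists>x y. (x, y) \<in> edges A \<and> h x = u \<and> h y = v" by blast
  qed
  have "h ` verts A = verts B"
  proof
    show "h ` verts A \<subseteq> verts B" using hV by blast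
    show "verts B \<subseteq> h ` verts A"
    proof
      fix x assume x: "x \<in> verts B"
      have "f x \<in> verts A" using im x by blast
      then show "x \<in> h ` verts A" using hf[OF x] by (metis image_eqI)
    qed
  qed
  then show ?thesis unfolding shi_le_def using strong by blast
qed

lemma mono_sub:
  fixes h :: "nat \<Rightarrow> nat" and Z :: "nat set"
  assumes Z: "infinite Z"
  shows "\<exists>Y\<subseteq>Z. infinite Y \<and> (\<forall>x\<in>Y. \<forall>y\<in>Y. x < y \<longrightarrow> h x \<le> h y)"
proof -
  define c where "c S = (if h (Min S) \<le> h (Max S) then 0 else (1::nat))" for S
  have "\<forall>x\<in>Z. \<forall>y\<in>Z. x \<noteq> y \<longrightarrow> c {x, y} < 2" unfolding c_def by auto
  then obtain Y t where Y: "Y \<subseteq> Z" "infinite Y" "t < 2" and hom: "\<forall>x\<in>Y. \<forall>y\<in>Y. x\<noteq>y \<longrightarrow> c {x, y} = t"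
    using Ramsey2[OF Z, where f=c and s=2] by blast
  have mm: "Min {x,y} = x" "Max {x,y} = y" if "x < y" for x y :: nat using that by auto
  show ?thesis
  proof (cases "t = 0")
    case True
    have "\<forall>x\<in>Y. \<forall>y\<in>Y. x < y \<longrightarrow> h x \<le> h y"
    proof (intro ballI impI)
      fix x y assume "x \<in> Y" "y \<in> Y" "x < y"
      then have "c {x,y} = 0" using hom True by auto
      then show "h x \<le> h y" unfolding c_def using mm[OF \<open>x < y\<close>] by (auto split: if_splits)
    qed
    then show ?thesis using Y by blast
  next
    case False
    have dec: "h y < h x" if "x \<in> Y" "y \<in> Y" "x < y" for x y
    proof -
      have "c {x,y} = 1" using hom False Y(3) that by auto
      then show ?thesis unfolding c_def using mm[OF \<open>x < y\<close>] by (auto split: if_splits)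
    qed
    obtain y0 where y0: "y0 \<in> Y" using Y(2) by (metis finite.emptyI ex_in_conv)
    have "\<exists>y\<in>Y. h y + N \<le> h y0" for N
    proof (induction N)
      case 0 then show ?case using y0 by auto
    next
      case (Suc N)
      then obtain y where y: "y \<in> Y" "h y + N \<le> h y0" by blast
      obtain y' where y': "y' \<in> Y" "y' > y" using Y(2) unfolding infinite_nat_iff_unbounded by blast
      have "h y' < h y" using dec[OF y(1) y'(1) y'(2)] .
      then have "h y' + Suc N \<le> h y0" using y(2) by simp
      then show ?case using y'(1) by blast
    qed
    then obtain y where "h y + (h y0 + 1) \<le> h y0" by blast
    then show ?thesis by simp
  qed
qed

lemma dickson:
  fixes F :: "nat \<Rightarrow> nat \<Rightarrow> nat" and Z :: "nat set"
  assumes "infinite Z"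
  shows "\<exists>Y\<subseteq>Z. infinite Y \<and> (\<forall>l<k. \<forall>x\<in>Y. \<forall>y\<in>Y. x < y \<longrightarrow> F x l \<le> F y l)"
proof (induction k)
  case 0 show ?case by (rule exI[of _ Z]) (simp add: assms)
next
  case (Suc k)
  then obtain Y where Y: "Y \<subseteq> Z" "infinite Y" "\<forall>l<k. \<forall>x\<in>Y. \<forall>y\<in>Y. x < y \<longrightarrow> F x l \<le> F y l" by blast
  obtain Y' where Y': "Y' \<subseteq> Y" "infinite Y'" "\<forall>x\<in>Y'. \<forall>y\<in>Y'. x < y \<longrightarrow> F x k \<le> F y k"
    using mono_sub[OF Y(2), of "\<lambda>x. F x k"] by blast
  have "\<forall>l<Suc k. \<forall>x\<in>Y'. \<forall>y\<in>Y'. x < y \<longrightarrow> F x l \<le> F y l"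
  proof (intro allI impI ballI)
    fix l x y assume l: "l < Suc k" and xy: "x \<in> Y'" "y \<in> Y'" "x < y"
    show "F x l \<le> F y l"
    proof (cases "l = k")
      case True then show ?thesis using Y'(3) xy by blast
    next
      case False then have "l < k" using l by simp
      then show ?thesis using Y(3) xy Y'(1) by blast
    qed
  qed
  moreover have "Y' \<subseteq> Z" using Y(1) Y'(1) by blast
  ultimately show ?case using Y'(2) by blast
qed

definition matching :: "graph \<Rightarrow> (nat \<times> nat) set \<Rightarrow> bool" where
  "matching G M \<longleftrightarrow> M \<subseteq> edges G \<and> (\<forall>p\<in>M. fst p \<noteq> snd p) \<and>
     (\<forall>p\<in>M. \<forall>q\<in>M. p \<noteq> q \<longrightarrow> fst p \<noteq> fst q \<and> fst p \<noteq> snd q \<and> snd p \<noteq> fst q \<and> snd p \<noteq> snd q)"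

lemma matching_fin: "frg G \<Longrightarrow> matching G M \<Longrightarrow> finite M"
  unfolding matching_def finite_reflexive_graph_def
  by (meson finite_SigmaI finite_subset)

lemma verts_K: "verts (complete_rgraph n) = {0..<n}" and edges_K: "edges (complete_rgraph n) = {0..<n} \<times> {0..<n}"
  unfolding complete_rgraph_def verts_def edges_def by simp_all

lemma big_matching:
  assumes G: "frg G" and n: "n \<ge> 2" and M: "matching G M" and c: "n * n \<le> card M"
  shows "shi_le (complete_rgraph n) G"
proof -
  define P where "P = {(i,j). i < j \<and> j < (n::nat)}"
  have Psub: "P \<subseteq> {0..<n} \<times> {0..<n}" unfolding P_def by auto
  have finP: "finite P" using Psub by (rule finite_subset) simp
  have "card P \<le> card ({0..<n} \<times> {0..<n})" using Psub by (intro card_mono) auto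
  then have cP: "card P \<le> card M" using c by (simp add: card_cartesian_product)
  obtain p where p: "p ` P \<subseteq> M" "inj_on p P" using card_le_inj[OF finP matching_fin[OF G M] cP] by blast
  have ME: "M \<subseteq> edges G" and Mne: "\<And>a. a \<in> M \<Longrightarrow> fst a \<noteq> snd a"
    and Md: "\<And>a b. a \<in> M \<Longrightarrow> b \<in> M \<Longrightarrow> a \<noteq> b \<Longrightarrow> fst a \<noteq> fst b \<and> fst a \<noteq> snd b \<and> snd a \<noteq> fst b \<and> snd a \<noteq> snd b"
    using M unfolding matching_def by blast+
  have pM: "q \<in> P \<Longrightarrow> p q \<in> M" for q using p(1) by blast
  have u1: "q = q'" if "q \<in> P" "q' \<in> P" "fst (p q') = fst (p q)" for q q'
  proof -
    have "p q' = p q" using Md[OF pM[OF that(2)] pM[OF that(1)]] that(3) by blast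
    then show ?thesis using p(2) that(1,2) unfolding inj_on_def by blast
  qed
  have u2: "q = q'" if "q \<in> P" "q' \<in> P" "snd (p q') = snd (p q)" for q q'
  proof -
    have "p q' = p q" using Md[OF pM[OF that(2)] pM[OF that(1)]] that(3) by blast
    then show ?thesis using p(2) that(1,2) unfolding inj_on_def by blast
  qed
  have u3: "fst (p q') \<noteq> snd (p q)" if "q \<in> P" "q' \<in> P" for q q'
  proof (cases "p q' = p q")
    case True then show ?thesis using Mne[OF pM[OF that(1)]] by simp
  next
    case False then show ?thesis using Md[OF pM[OF that(2)] pM[OF that(1)]] by blast
  qed
  define f where "f v = (if \<exists>q\<in>P. fst (p q) = v then fst (SOME q. q \<in> P \<and> fst (p q) = v)
     else if \<exists>q\<in>P. snd (p q) = v then snd (SOME q. q \<in> P \<and> snd (p q) = v) else 0)" for v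
  have f1: "f (fst (p q)) = fst q" if q: "q \<in> P" for q
  proof -
    have "(SOME q'. q' \<in> P \<and> fst (p q') = fst (p q)) = q"
      by (rule some_equality) (use q u1 in auto)
    then show ?thesis unfolding f_def using q by auto
  qed
  have f2: "f (snd (p q)) = snd q" if q: "q \<in> P" for q
  proof -
    have "\<not> (\<exists>q'\<in>P. fst (p q') = snd (p q))" using u3 q by blast
    moreover have "(SOME q'. q' \<in> P \<and> snd (p q') = snd (p q)) = q"
      by (rule some_equality) (use q u2 in auto)
    ultimately show ?thesis unfolding f_def using q by auto
  qed
  have fn: "f v < n" for v
  proof -
    have a: "fst q < n" "snd q < n" if "q \<in> P" for q using that unfolding P_def by auto
    have "fst (SOME q. q \<in> P \<and> fst (p q) = v) < n" if "\<exists>q\<in>P. fst (p q) = v"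
      using someI_ex[of "\<lambda>q. q \<in> P \<and> fst (p q) = v"] that a by blast
    moreover have "snd (SOME q. q \<in> P \<and> snd (p q) = v) < n" if "\<exists>q\<in>P. snd (p q) = v"
      using someI_ex[of "\<lambda>q. q \<in> P \<and> snd (p q) = v"] that a by blast
    ultimately show ?thesis unfolding f_def using n by auto
  qed
  have endV: "fst (p q) \<in> verts G" "snd (p q) \<in> verts G" "(fst (p q), snd (p q)) \<in> edges G" if "q \<in> P" for q
  proof -
    have e: "(fst (p q), snd (p q)) \<in> edges G" using pM[OF that] ME by auto
    show "(fst (p q), snd (p q)) \<in> edges G" by (rule e)
    show "fst (p q) \<in> verts G" using frg_E(2)[OF G e] .
    show "snd (p q) \<in> verts G" using frg_E(3)[OF G e] .
  qed
  have hom: "graph_hom G (complete_rgraph n) f"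
    unfolding graph_hom_def verts_K edges_K using fn by auto
  have surj: "f ` verts G = verts (complete_rgraph n)"
  proof
    show "f ` verts G \<subseteq> verts (complete_rgraph n)" unfolding verts_K using fn by auto
    show "verts (complete_rgraph n) \<subseteq> f ` verts G"
    proof
      fix i assume "i \<in> verts (complete_rgraph n)"
      then have i: "i < n" unfolding verts_K by simp
      show "i \<in> f ` verts G"
      proof (cases "i = 0")
        case True
        have q: "(0,1) \<in> P" unfolding P_def using n by auto
        show ?thesis using f1[OF q] endV(1)[OF q] True by (metis fst_conv image_eqI)
      next
        case False
        have q: "(0,i) \<in> P" unfolding P_def using i False by auto
        show ?thesis using f2[OF q] endV(2)[OF q] by (metis snd_conv image_eqI)
      qed
    qed
  qed
  have strong: "strong_hom G (complete_rgraph n) f" unfolding strong_hom_def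
  proof (intro conjI hom allI impI)
    fix u v assume a: "u \<in> f ` verts G \<and> v \<in> f ` verts G \<and> (u, v) \<in> edges (complete_rgraph n)"
    then have un: "u < n" "v < n" unfolding edges_K by auto
    consider "u = v" | "u < v" | "v < u" by linarith
    then show "\<exists>x y. (x, y) \<in> edges G \<and> f x = u \<and> f y = v"
    proof cases
      case 1
      obtain x where "x \<in> verts G" "f x = u" using a by blast
      then show ?thesis using frg_E(5)[OF G] 1 by blast
    next
      case 2
      have q: "(u,v) \<in> P" unfolding P_def using 2 un by auto
      show ?thesis using endV(3)[OF q] f1[OF q] f2[OF q] by (metis fst_conv snd_conv)
    next
      case 3
      have q: "(v,u) \<in> P" unfolding P_def using 3 un by auto
      have "(snd (p (v,u)), fst (p (v,u))) \<in> edges G" using endV(3)[OF q] frg_E(4)[OF G] by blast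
      then show ?thesis using f1[OF q] f2[OF q] by auto
    qed
  qed
  show ?thesis unfolding shi_le_def using strong surj by blast
qed

lemma cls_bound:
  assumes G: "frg G" and m: "\<forall>M. matching G M \<longrightarrow> card M < m"
  shows "card (Cls G) \<le> 2*m + 2^(2*m)"
proof -
  have m0: "matching G {}" unfolding matching_def by simp
  obtain M where M: "matching G M" and maxM0: "\<forall>M'. matching G M' \<longrightarrow> card M' \<le> card M"
    using ex_has_greatest_nat[of "matching G" "{}" card m] m0 m by blast
  have maxM: "card M' \<le> card M" if "matching G M'" for M' using maxM0 that by blast
  have finM: "finite M" using matching_fin[OF G M(1)] .
  define W where "W = fst ` M \<union> snd ` M"
  have finW: "finite W" unfolding W_def using finM by simp
  have cW: "card W \<le> 2*m"
  proof -
    have "card W \<le> card (fst ` M) + card (snd ` M)" unfolding W_def by (rule card_Un_le)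
    also have "\<dots> \<le> card M + card M" using card_image_le[OF finM] add_mono by blast
    also have "\<dots> \<le> 2*m" using m M by fastforce
    finally show ?thesis .
  qed
  define U where "U = verts G - W"
  define N where "N u = {w. w \<noteq> u \<and> (u,w) \<in> edges G}" for u
  have NW: "N u \<subseteq> W" if u: "u \<in> U" for u
  proof
    fix w assume w: "w \<in> N u"
    show "w \<in> W"
    proof (rule ccontr)
      assume wW: "w \<notin> W"
      have uW: "u \<notin> W" using u unfolding U_def by blast
      have fW: "fst q \<in> W" "snd q \<in> W" if "q \<in> M" for q unfolding W_def using that by auto
      have notin: "(u,w) \<notin> M" using fW uW by fastforce
      have mm: "matching G (insert (u,w) M)"
        unfolding matching_def
      proof (intro conjI ballI impI)
        show "insert (u, w) M \<subseteq> edges G" using M(1) w unfolding matching_def N_def by auto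
      next
        fix p assume "p \<in> insert (u, w) M"
        then show "fst p \<noteq> snd p" using M(1) w unfolding matching_def N_def by auto
      next
        fix p q assume pq: "p \<in> insert (u, w) M" "q \<in> insert (u, w) M" "p \<noteq> q"
        have dM: "\<And>a b. a \<in> M \<Longrightarrow> b \<in> M \<Longrightarrow> a \<noteq> b \<Longrightarrow> fst a \<noteq> fst b \<and> fst a \<noteq> snd b \<and> snd a \<noteq> fst b \<and> snd a \<noteq> snd b"
          using M(1) unfolding matching_def by blast
        consider "p = (u,w)" "q \<in> M" | "q = (u,w)" "p \<in> M" | "p \<in> M" "q \<in> M"
          using pq by auto
        then have "fst p \<noteq> fst q \<and> fst p \<noteq> snd q \<and> snd p \<noteq> fst q \<and> snd p \<noteq> snd q"
        proof cases
          case 1 then show ?thesis using fW[OF 1(2)] uW wW by auto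
        next
          case 2 then show ?thesis using fW[OF 2(2)] uW wW by auto
        next
          case 3 then show ?thesis using dM pq(3) by blast
        qed
        then show "fst p \<noteq> fst q" "fst p \<noteq> snd q" "snd p \<noteq> fst q" "snd p \<noteq> snd q" by auto
      qed
      have "card (insert (u,w) M) = Suc (card M)" using finM notin by simp
      then show False using maxM[OF mm] by simp
    qed
  qed
  have tw: "cls G u = cls G u'" if u: "u \<in> U" and u': "u' \<in> U" and e: "N u = N u'" for u u'
  proof -
    have uV: "u \<in> verts G" "u' \<in> verts G" using u u' unfolding U_def by auto
    have "twin G u u'"
    proof (cases "u = u'")
      case True then show ?thesis unfolding twin_def using uV by simp
    next
      case False
      have "(u,u') \<notin> edges G"
      proof
        assume "(u,u') \<in> edges G"
        then have "u' \<in> N u" unfolding N_def using False by simp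
        then show False using NW[OF u] u' unfolding U_def by blast
      qed
      moreover have "\<forall>w. w \<noteq> u \<and> w \<noteq> u' \<longrightarrow> ((u,w) \<in> edges G \<longleftrightarrow> (u',w) \<in> edges G)"
      proof (intro allI impI)
        fix w assume "w \<noteq> u \<and> w \<noteq> u'"
        then have "(u,w) \<in> edges G \<longleftrightarrow> w \<in> N u" "(u',w) \<in> edges G \<longleftrightarrow> w \<in> N u'" unfolding N_def by auto
        then show "(u,w) \<in> edges G \<longleftrightarrow> (u',w) \<in> edges G" using e by simp
      qed
      ultimately show ?thesis unfolding twin_def using uV by blast
    qed
    then have "u' \<in> cls G u" unfolding cls_def by simp
    then show ?thesis using cls_eq[OF G] by metis
  qed
  define r where "r S = cls G (SOME u. u \<in> U \<and> N u = S)" for S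
  have sub1: "cls G ` U \<subseteq> r ` (N ` U)"
  proof
    fix A assume "A \<in> cls G ` U"
    then obtain u where u: "u \<in> U" "A = cls G u" by blast
    have ex: "\<exists>u'. u' \<in> U \<and> N u' = N u" using u by blast
    have "r (N u) = cls G u" unfolding r_def using someI_ex[OF ex] tw u(1) by metis
    then show "A \<in> r ` (N ` U)" using u by blast
  qed
  have NP: "N ` U \<subseteq> Pow W" using NW by blast
  have finNU: "finite (N ` U)" using NP finW finite_subset by blast
  have "card (cls G ` U) \<le> card (r ` (N ` U))" using sub1 finNU by (intro card_mono) auto
  also have "\<dots> \<le> card (N ` U)" using finNU by (rule card_image_le)
  also have "\<dots> \<le> card (Pow W)" using NP finW by (intro card_mono) auto
  also have "\<dots> = 2 ^ card W" using finW by (simp add: card_Pow)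
  also have "\<dots> \<le> 2 ^ (2*m)" using cW by (intro power_increasing) auto
  finally have cU: "card (cls G ` U) \<le> 2 ^ (2*m)" .
  have cWW: "card (cls G ` W) \<le> 2*m" using card_image_le[OF finW, of "cls G"] cW by simp
  have "Cls G \<subseteq> cls G ` W \<union> cls G ` U" unfolding Cls_def U_def by blast
  then have "card (Cls G) \<le> card (cls G ` W \<union> cls G ` U)"
    using finW finNU finite_Cls[OF G] by (intro card_mono) (auto intro: finite_subset[OF _ frg_E(1)[OF G]] simp: U_def)
  also have "\<dots> \<le> card (cls G ` W) + card (cls G ` U)" by (rule card_Un_le)
  finally show ?thesis using cU cWW by simp
qed

lemma Av_E: "H \<in> Av_K n \<Longrightarrow> frg H" "H \<in> Av_K n \<Longrightarrow> \<not> shi_le (complete_rgraph n) H"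
  unfolding Av_K_def by auto

lemma Av_bound:
  assumes n: "n \<ge> 2" and H: "H \<in> Av_K n"
  shows "card (Cls H) \<le> 2*(n*n) + 2^(2*(n*n))"
proof -
  have "\<forall>M. matching H M \<longrightarrow> card M < n*n"
  proof (intro allI impI)
    fix M assume M: "matching H M"
    show "card M < n*n"
    proof (rule ccontr)
      assume "\<not> card M < n*n"
      then have "n*n \<le> card M" by simp
      then show False using big_matching[OF Av_E(1)[OF H] n M] Av_E(2)[OF H] by blast
    qed
  qed
  then show ?thesis using cls_bound[OF Av_E(1)[OF H]] by blast
qed

lemma Av1:
  assumes H: "H \<in> Av_K 1" shows "H \<in> Av_K 2"
proof -
  have G: "frg H" using Av_E(1)[OF H] .
  have "\<not> shi_le (complete_rgraph 2) H"
  proof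
    assume "shi_le (complete_rgraph 2) H"
    then obtain f where "f ` verts H = {0..<(2::nat)}" unfolding shi_le_def verts_K by blast
    then have "verts H \<noteq> {}" by auto
    then obtain x0 where x0: "x0 \<in> verts H" by blast
    define f0 where "f0 = (\<lambda>x::nat. 0::nat)"
    have im: "f0 ` verts H = verts (complete_rgraph 1)" unfolding verts_K f0_def using x0 by auto
    have hom: "graph_hom H (complete_rgraph 1) f0" unfolding graph_hom_def verts_K edges_K f0_def by simp
    have "strong_hom H (complete_rgraph 1) f0" unfolding strong_hom_def
    proof (intro conjI hom allI impI)
      fix u v assume "u \<in> f0 ` verts H \<and> v \<in> f0 ` verts H \<and> (u, v) \<in> edges (complete_rgraph 1)"
      then have "u = 0" "v = 0" unfolding f0_def by auto
      then show "\<exists>x y. (x, y) \<in> edges H \<and> f0 x = u \<and> f0 y = v" using frg_E(5)[OF G x0] unfolding f0_def by blast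
    qed
    then have "shi_le (complete_rgraph 1) H" unfolding shi_le_def using im by blast
    then show False using Av_E(2)[OF H] by blast
  qed
  then show ?thesis unfolding Av_K_def using G by blast
qed

lemma antichain_part:
  fixes g :: "nat \<Rightarrow> graph"
  assumes n: "n \<ge> 2" and g: "\<forall>i. g i \<in> Av_K n"
  shows "\<exists>i j. i \<noteq> j \<and> shi_le (g i) (g j)"
proof -
  define K where "K = 2*(n*n) + 2^(2*(n*n))"
  have fr: "\<And>i. frg (g i)" using g Av_E(1) by blast
  have kb: "\<And>i. card (Cls (g i)) \<le> K" unfolding K_def using Av_bound[OF n] g by blast
  define k where "k i = card (Cls (g i))" for i
  have "\<forall>i. \<exists>e. bij_betw e {0..<k i} (Cls (g i))"
    unfolding k_def using ex_bij_betw_nat_finite finite_Cls[OF fr] by blast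
  then have "\<exists>e. \<forall>i. bij_betw (e i) {0..<k i} (Cls (g i))" by (rule choice)
  then obtain e where e: "\<And>i. bij_betw (e i) {0..<k i} (Cls (g i))" by blast
  define sh where "sh i = (k i, {(a,b). a < k i \<and> b < k i \<and> cadj (g i) (e i a) (e i b)})" for i
  have "sh ` UNIV \<subseteq> {0..K} \<times> Pow ({0..<K} \<times> {0..<K})"
  proof
    fix z assume "z \<in> sh ` UNIV"
    then obtain i where z: "z = sh i" by blast
    have "k i \<le> K" using kb unfolding k_def by simp
    then show "z \<in> {0..K} \<times> Pow ({0..<K} \<times> {0..<K})" unfolding z sh_def by auto
  qed
  then have "finite (sh ` UNIV)" by (rule finite_subset) simp
  then obtain i0 where "infinite {a \<in> UNIV. sh a = sh i0}"
    using pigeonhole_infinite[of UNIV sh] infinite_UNIV_nat by auto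
  then have Zinf: "infinite {a. sh a = sh i0}" by simp
  obtain Y where Y: "Y \<subseteq> {a. sh a = sh i0}" "infinite Y"
    "\<forall>l<k i0. \<forall>x\<in>Y. \<forall>y\<in>Y. x < y \<longrightarrow> card (e x l) \<le> card (e y l)"
    using dickson[OF Zinf, where F="\<lambda>x l. card (e x l)" and k="k i0"] by blast
  obtain x where x: "x \<in> Y" using Y(2) by (metis finite.emptyI ex_in_conv)
  obtain y where y: "y \<in> Y" "y > x" using Y(2) unfolding infinite_nat_iff_unbounded by blast
  have shx: "sh x = sh i0" and shy: "sh y = sh i0" using x y Y(1) by auto
  have kx: "k x = k i0" and ky: "k y = k i0" using shx shy unfolding sh_def by auto
  have adj: "\<forall>a<k i0. \<forall>b<k i0. cadj (g x) (e x a) (e x b) \<longleftrightarrow> cadj (g y) (e y a) (e y b)"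
  proof (intro allI impI)
    fix a b assume ab: "a < k i0" "b < k i0"
    have "snd (sh x) = snd (sh y)" using shx shy by simp
    then have "(a,b) \<in> snd (sh x) \<longleftrightarrow> (a,b) \<in> snd (sh y)" by simp
    then show "cadj (g x) (e x a) (e x b) \<longleftrightarrow> cadj (g y) (e y a) (e y b)"
      unfolding sh_def using ab kx ky by simp
  qed
  have sz: "\<forall>l<k i0. card (e x l) \<le> card (e y l)" using Y(3) x y by blast
  have "shi_le (g x) (g y)"
    using build_hom[of "g x" "g y" "e x" "k i0" "e y", OF fr fr _ _ adj sz] e[of x] e[of y] kx ky by simp
  then show ?thesis using y(2) by (metis less_irrefl)
qed

lemma descent_part:
  assumes fr: "\<And>i. frg (g i)"
  shows "\<not> (\<forall>i. shi_le (g (Suc i)) (g i) \<and> \<not> shi_le (g i) (g (Suc i)))"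
proof
  assume a: "\<forall>i. shi_le (g (Suc i)) (g i) \<and> \<not> shi_le (g i) (g (Suc i))"
  define c where "c i = card (verts (g i))" for i
  have le: "c (Suc i) \<le> c i" for i
  proof -
    have "shi_le (g (Suc i)) (g i)" using a by blast
    then show ?thesis unfolding c_def by (rule card_le_shi) (rule fr)
  qed
  have lt: "c (Suc i) < c i" for i
  proof (rule ccontr)
    assume "\<not> c (Suc i) < c i"
    then have "card (verts (g (Suc i))) = card (verts (g i))" using le[of i] unfolding c_def by simp
    moreover have "shi_le (g (Suc i)) (g i)" using a by blast
    ultimately have "shi_le (g i) (g (Suc i))" using same_card_rev[OF fr[of "Suc i"] fr[of i]] by simp
    then show False using a by blast
  qed
  have "c i + i \<le> c 0" for i
  proof (induction i)
    case (Suc i) then show ?case using lt[of i] by simp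
  qed simp
  from this[of "c 0 + 1"] show False by simp
qed

theorem theorem3p6:
  fixes n :: nat
  assumes "n \<ge> 1"
  shows "wqo_class shi_le (Av_K n)"
  unfolding wqo_class_def
proof (intro conjI notI)
  assume "\<exists>g :: nat \<Rightarrow> graph. (\<forall>i. g i \<in> Av_K n) \<and> (\<forall>i. shi_le (g (Suc i)) (g i) \<and> \<not> shi_le (g i) (g (Suc i)))"
  then obtain g :: "nat \<Rightarrow> graph" where gg: "(\<forall>i. g i \<in> Av_K n) \<and> (\<forall>i. shi_le (g (Suc i)) (g i) \<and> \<not> shi_le (g i) (g (Suc i)))" ..
  have g: "\<forall>i. g i \<in> Av_K n" using gg by (rule conjunct1)
  have d: "\<forall>i. shi_le (g (Suc i)) (g i) \<and> \<not> shi_le (g i) (g (Suc i))" using gg by (rule conjunct2)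
  have fr: "\<And>i. frg (g i)" using g Av_E(1) by blast
  have "\<not> (\<forall>i. shi_le (g (Suc i)) (g i) \<and> \<not> shi_le (g i) (g (Suc i)))"
    by (rule descent_part) (rule fr)
  from this d show False by (rule notE)
next
  assume "\<exists>g :: nat \<Rightarrow> graph. (\<forall>i. g i \<in> Av_K n) \<and> (\<forall>i j. i \<noteq> j \<longrightarrow> \<not> shi_le (g i) (g j))"
  then obtain g :: "nat \<Rightarrow> graph" where gg: "(\<forall>i. g i \<in> Av_K n) \<and> (\<forall>i j. i \<noteq> j \<longrightarrow> \<not> shi_le (g i) (g j))" ..
  have g: "\<forall>i. g i \<in> Av_K n" using gg by (rule conjunct1)
  have ac: "\<forall>i j. i \<noteq> j \<longrightarrow> \<not> shi_le (g i) (g j)" using gg by (rule conjunct2)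
  have "\<exists>i j. i \<noteq> j \<and> shi_le (g i) (g j)"
  proof (cases "n = 1")
    case True
    have "\<forall>i. g i \<in> Av_K 2" using g Av1 True by simp
    then show ?thesis by (rule antichain_part[of 2 g, OF order.refl])
  next
    case False
    then have "n \<ge> 2" using assms by simp
    then show ?thesis using g by (rule antichain_part)
  qed
  then obtain i j where ij: "i \<noteq> j" "shi_le (g i) (g j)" by blast
  have "\<not> shi_le (g i) (g j)" using ac ij(1) by simp
  then show False using ij(2) by (rule notE)
qed

end
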